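(* Let $L\ge1$ be an integer and $h(x)=\mathrm{sech}\big((2L+1)\,\mathrm{arcsech}(x)\big)$. Then $h$ is monotonically increasing and convex on the interval $(0,1)$. *)

theory Defs
  imports "HOL-Analysis.Analysis"
begin

definition sech :: "real \<Rightarrow> real" where
  "sech x = 1 / cosh x"

definition arcsech :: "real \<Rightarrow> real" where
  "arcsech x = arcosh (1 / x)"

end

theory Submission
  imports Defs
begin

lemma sinh_le_x_cosh:
  fixes s :: real assumes "s \<ge> 0" shows "sinh s \<le> s * cosh s"
proof -
  have "(\<lambda>u. u * cosh u - sinh u) 0 \<le> (\<lambda>u. u * cosh u - sinh u) s"
  proof (rule DERIV_nonneg_imp_nondecreasing[OF assms])
    fix x :: real assume "0 \<le> x" "x \<le> s"
    show "\<exists>y. ((\<lambda>u. u * cosh u - sinh u) has_real_derivative y) (at x) \<and> 0 \<le> y"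
      by (rule exI[of _ "x * sinh x"]) (auto intro!: derivative_eq_intros simp: \<open>0 \<le> x\<close>)
  qed
  thus ?thesis by simp
qed

definition psi :: "real \<Rightarrow> real" where
  "psi s = s * cosh s / sinh s - 2 * s * sinh s / cosh s"

lemma psi_deriv_nonpos:
  fixes s :: real assumes "s > 0"
  shows "cosh s / sinh s - s / (sinh s)^2 - 2 * sinh s / cosh s - 2 * s / (cosh s)^2 \<le> 0"
proof -
  define S where "S = sinh s"
  define C where "C = cosh s"
  have S: "S > 0" using assms by (simp add: S_def)
  have C: "C > 0" by (simp add: C_def)
  have CS: "C^2 = 1 + S^2" by (simp add: C_def S_def cosh_square_eq)
  have le: "S \<le> s * C" using sinh_le_x_cosh[of s] assms by (simp add: S_def C_def)
  have key: "S * C^3 - s * C^2 - 2 * S^3 * C - 2 * s * S^2 \<le> 0"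
  proof -
    have a: "S * (1 + 3 * S^2) \<le> s * C * (1 + 3 * S^2)"
      by (rule mult_right_mono[OF le]) (simp add: add_nonneg_nonneg)
    have b: "C^2 * (1 - S^2) \<le> 1 + 3 * S^2"
      using CS by (simp add: algebra_simps power2_eq_square) (smt (verit) S mult_nonneg_nonneg zero_le_square)
    have "C * (S * C^3 - 2 * S^3 * C) = S * (C^2 * (C^2 - 2 * S^2))"
      by (simp add: algebra_simps power2_eq_square power3_eq_cube)
    also have "C^2 - 2 * S^2 = 1 - S^2" using CS by simp
    also have "S * (C^2 * (1 - S^2)) \<le> S * (1 + 3 * S^2)" using b S by (simp add: mult_left_mono)
    also have "\<dots> \<le> C * (s * (C^2 + 2 * S^2))" using a CS by (simp add: algebra_simps)
    finally have "C * (S * C^3 - 2 * S^3 * C) \<le> C * (s * (C^2 + 2 * S^2))" .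
    hence "S * C^3 - 2 * S^3 * C \<le> s * (C^2 + 2 * S^2)" using C by simp
    thus ?thesis by (simp add: algebra_simps)
  qed
  have eq: "C / S - s / S^2 - 2 * S / C - 2 * s / C^2
      = (S * C^3 - s * C^2 - 2 * S^3 * C - 2 * s * S^2) / (S^2 * C^2)"
    using S C by (simp add: field_simps power2_eq_square power3_eq_cube)
  have "(S * C^3 - s * C^2 - 2 * S^3 * C - 2 * s * S^2) / (S^2 * C^2) \<le> 0"
    using key S C by (simp add: divide_nonpos_pos)
  thus ?thesis using eq by (simp add: S_def C_def)
qed

lemma psi_antitone:
  fixes a b :: real assumes "0 < a" "a \<le> b" shows "psi b \<le> psi a"
proof (rule DERIV_nonpos_imp_nonincreasing[OF assms(2)])
  fix x assume x: "a \<le> x" "x \<le> b"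
  hence xp: "x > 0" using assms by simp
  have "sinh x > 0" using xp by simp
  hence "(psi has_real_derivative
      (cosh x / sinh x - x / (sinh x)^2 - 2 * sinh x / cosh x - 2 * x / (cosh x)^2)) (at x)"
    unfolding psi_def[abs_def]
    apply (auto intro!: derivative_eq_intros)
    apply (simp add: field_simps power2_eq_square)
    apply (insert cosh_square_eq[of x])
    apply algebra
    done
  thus "\<exists>y. (psi has_real_derivative y) (at x) \<and> y \<le> 0"
    using psi_deriv_nonpos[OF xp] by blast
qed

definition FF :: "real \<Rightarrow> real \<Rightarrow> real" where
  "FF n t = sinh (n * t) * (cosh t)^2 / (sinh t * (cosh (n * t))^2)"

lemma FF_antitone:
  fixes n a b :: real assumes n: "n \<ge> 1" and "0 < a" "a \<le> b" shows "FF n b \<le> FF n a"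
proof -
  define G where "G t = ln (sinh (n * t)) - ln (sinh t) + 2 * ln (cosh t) - 2 * ln (cosh (n * t))" for t
  have FG: "FF n t = exp (G t)" if "t > 0" for t
  proof -
    have "n * t > 0" using that n by simp
    hence "sinh (n * t) > 0" "sinh t > 0" using that by auto
    moreover have "exp (2 * ln (cosh u)) = (cosh u)^2" for u :: real
      by (subst exp_double) simp
    ultimately show ?thesis unfolding G_def FF_def
      by (simp add: exp_diff exp_add exp_ln ln_mult[symmetric] ln_div[symmetric] ln_realpow[symmetric])
  qed
  have "G b \<le> G a"
  proof (rule DERIV_nonpos_imp_nonincreasing[OF assms(3)])
    fix x assume x: "a \<le> x" "x \<le> b"
    hence xp: "x > 0" using assms by simp
    have nx: "n * x > 0" using xp n by simp
    have s1: "sinh x > 0" "sinh (n * x) > 0" using xp nx by auto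
    have "(G has_real_derivative
       n * cosh (n * x) / sinh (n * x) - cosh x / sinh x + 2 * sinh x / cosh x - 2 * n * sinh (n * x) / cosh (n * x)) (at x)"
      unfolding G_def[abs_def] using s1
      by (auto intro!: derivative_eq_intros simp: field_simps)
    moreover have "n * cosh (n * x) / sinh (n * x) - cosh x / sinh x + 2 * sinh x / cosh x - 2 * n * sinh (n * x) / cosh (n * x)
       = (psi (n * x) - psi x) / x"
      unfolding psi_def using s1 xp by (simp add: field_simps)
    moreover have "psi (n * x) \<le> psi x"
      by (rule psi_antitone[OF xp]) (use n xp in simp)
    ultimately show "\<exists>y. (G has_real_derivative y) (at x) \<and> y \<le> 0"
      using xp by (intro exI[of _ "(psi (n * x) - psi x) / x"]) (auto simp: divide_nonpos_pos)
  qed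
  thus ?thesis using FG assms by simp
qed

lemma h_deriv:
  fixes n x :: real assumes x: "0 < x" "x < 1"
  shows "((\<lambda>x. 1 / cosh (n * arcosh (1 / x))) has_real_derivative n * FF n (arcosh (1 / x))) (at x)"
proof -
  define a where "a = arcosh (1 / x)"
  have gt: "1 / x > 1" using x by simp
  have ca: "cosh a = 1 / x" unfolding a_def using gt by simp
  have sa: "sinh a = sqrt ((1 / x)^2 - 1)" unfolding a_def using gt by (simp add: sinh_arcosh_real)
  have ap: "a > 0" unfolding a_def using gt x by simp
  have sap: "sinh a > 0" using ap by simp
  have xe: "x = 1 / cosh a" using ca by simp
  have da: "((\<lambda>x. arcosh (1 / x)) has_real_derivative (1 / sqrt ((1 / x)^2 - 1)) * (- 1 / x^2)) (at x)"
    by (rule DERIV_chain2[where g="\<lambda>x. 1 / x" and x=x, OF arcosh_real_has_field_derivative[OF gt, where A=UNIV]])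
       (use x in \<open>auto intro!: derivative_eq_intros simp: power2_eq_square\<close>)
  have df: "((\<lambda>y. 1 / cosh (n * y)) has_real_derivative - (n * sinh (n * a)) / (cosh (n * a))^2) (at a)"
    by (auto intro!: derivative_eq_intros simp: power2_eq_square)
  have "((\<lambda>x. 1 / cosh (n * arcosh (1 / x))) has_real_derivative
     (- (n * sinh (n * a)) / (cosh (n * a))^2) * ((1 / sqrt ((1 / x)^2 - 1)) * (- 1 / x^2))) (at x)"
    using DERIV_chain2[where g="\<lambda>x. arcosh (1 / x)" and x=x, OF df[unfolded a_def] da] unfolding a_def by simp
  moreover have "(- (n * sinh (n * a)) / (cosh (n * a))^2) * ((1 / sqrt ((1 / x)^2 - 1)) * (- 1 / x^2)) = n * FF n a"
  proof -
    have "x * cosh a = 1" using ca x by (simp add: field_simps)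
    hence "x^2 * (cosh a)^2 = 1" by (metis power_mult_distrib power_one)
    thus ?thesis
      unfolding FF_def sa[symmetric] using sap x by (simp add: field_simps ca[symmetric])
  qed
  ultimately show ?thesis unfolding a_def by simp
qed

lemma arcosh_inv_anti:
  fixes x y :: real assumes "0 < x" "x \<le> y" "y < 1"
  shows "arcosh (1 / y) \<le> arcosh (1 / x)" "arcosh (1 / y) > 0"
proof -
  have "1 < 1 / y" "1 / y \<le> 1 / x" using assms by (auto simp: field_simps)
  thus "arcosh (1 / y) \<le> arcosh (1 / x)"
    using arcosh_less_iff_real[of "1 / x" "1 / y"] by (simp add: not_less[symmetric])
  show "arcosh (1 / y) > 0" using \<open>1 < 1 / y\<close> assms by simp
qed

theorem proposition3:
  fixes L :: nat and h :: "real \<Rightarrow> real"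
  assumes "L \<ge> 1"
    and "\<And>x. h x = sech ((2 * real L + 1) * arcsech x)"
  shows "mono_on {0<..<1} h \<and> convex_on {0<..<1} h"
proof -
  define n where "n = 2 * real L + 1"
  have n: "n \<ge> 1" unfolding n_def by simp
  have hf: "h = (\<lambda>x. 1 / cosh (n * arcosh (1 / x)))"
    using assms(2) by (auto simp: n_def sech_def arcsech_def)
  have "mono_on {0<..<1} h"
  proof (rule mono_onI)
    fix x y :: real assume "x \<in> {0<..<1}" "y \<in> {0<..<1}" "x \<le> y"
    hence xy: "0 < x" "x \<le> y" "y < 1" by auto
    note A = arcosh_inv_anti[OF xy]
    have "cosh (n * arcosh (1 / y)) \<le> cosh (n * arcosh (1 / x))"
      using A n by (subst cosh_real_nonneg_le_iff) (auto intro: mult_left_mono)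
    thus "h x \<le> h y" unfolding hf by (simp add: frac_le)
  qed
  moreover have "convex_on {0<..<1} h"
  proof (rule convex_on_realI[where f' = "\<lambda>x. n * FF n (arcosh (1 / x))"])
    show "connected {0<..<1::real}" by simp
    show "(h has_real_derivative n * FF n (arcosh (1 / x))) (at x)" if "x \<in> {0<..<1}" for x
      unfolding hf using h_deriv[of x n] that by simp
    show "n * FF n (arcosh (1 / x)) \<le> n * FF n (arcosh (1 / y))"
      if "x \<in> {0<..<1}" "y \<in> {0<..<1}" "x \<le> y" for x y
    proof -
      have xy: "0 < x" "x \<le> y" "y < 1" using that by auto
      note A = arcosh_inv_anti[OF xy]
      show ?thesis using FF_antitone[OF n A(2) A(1)] n by simp
    qed
  qed
  ultimately show ?thesis by simp
qed

end
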